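(* Let $X$ be a topological space with $|X|\ge 2$, $G$ an infinite Abelian group, and $f\colon G\to X$ a Korovin mapping. Then the Korovin orbit $G_f$ is Hausdorff if and only if the space $X$ contains two disjoint nonempty open sets. (In particular, every Korovin orbit in $X^G$ is Hausdorff if and only if some Korovin orbit in $X^G$ is Hausdorff.)
   Context: $X^G$ carries the product topology. For $f\in X^G$ and $g\in G$ let $gf\in X^G$ be given by $(gf)(x)=f(xg)$, and let $G_f=\{gf:g\in G\}\subseteq X^G$ with the subspace topology. The map $f\colon G\to X$ is a Korovin mapping if $\pi_M(G_f)=X^M$ for every countable $M\subseteq G$, where $\pi_M\colon X^G\to X^M$ is the projection; in that case $G_f$ is called a Korovin orbit. *)

theory Defs
  imports "HOL-Analysis.Analysis" "HOL-Library.Countable_Set"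
begin

text \<open>The group G is modelled as an abelian group type (written additively), so
  (g f)(x) = f(x g) becomes f (x + g).\<close>

definition shift :: "'g::ab_group_add \<Rightarrow> ('g \<Rightarrow> 'a) \<Rightarrow> ('g \<Rightarrow> 'a)" where
  "shift g f = (\<lambda>x. f (x + g))"

definition orbit :: "('g::ab_group_add \<Rightarrow> 'a) \<Rightarrow> ('g \<Rightarrow> 'a) set" where
  "orbit f = {shift g f | g. True}"

definition power_top :: "'a topology \<Rightarrow> ('g \<Rightarrow> 'a) topology" where
  "power_top X = product_topology (\<lambda>_. X) UNIV"

definition orbit_space :: "'a topology \<Rightarrow> ('g::ab_group_add \<Rightarrow> 'a) \<Rightarrow> ('g \<Rightarrow> 'a) topology" where
  "orbit_space X f = subtopology (power_top X) (orbit f)"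

definition korovin_mapping :: "'a topology \<Rightarrow> ('g::ab_group_add \<Rightarrow> 'a) \<Rightarrow> bool" where
  "korovin_mapping X f \<longleftrightarrow> f ` UNIV \<subseteq> topspace X \<and>
     (\<forall>M. countable M \<longrightarrow> (\<lambda>h. restrict h M) ` orbit f = PiE M (\<lambda>_. topspace X))"

end

theory Submission
  imports Defs
begin

lemma kor_pick:
  assumes "korovin_mapping X f" "finite M" "t \<in> PiE M (\<lambda>_. topspace X)"
  shows "\<exists>k. \<forall>i\<in>M. f (i + k) = t i"
proof -
  have "countable M" using assms(2) by (simp add: countable_finite)
  then have "t \<in> (\<lambda>h. restrict h M) ` orbit f" using assms unfolding korovin_mapping_def by blast
  then obtain k where "t = restrict (shift k f) M" unfolding orbit_def by blast
  then show ?thesis by (auto simp: shift_def)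
qed

lemma kor_range: "korovin_mapping X f \<Longrightarrow> f i \<in> topspace X"
  unfolding korovin_mapping_def by blast

lemma top_orbit: "topspace (orbit_space X f) = topspace (power_top X) \<inter> orbit f"
  by (simp add: orbit_space_def)

lemma top_power: "topspace (power_top X) = {h. \<forall>i. h i \<in> topspace X}"
  by (auto simp: power_top_def PiE_def extensional_def)

lemma main:
  fixes X :: "'a topology" and f :: "'g::ab_group_add \<Rightarrow> 'a"
  assumes two: "\<exists>a\<in>topspace X. \<exists>b\<in>topspace X. a \<noteq> b"
    and inf: "infinite (UNIV :: 'g set)"
    and kor: "korovin_mapping X f"
  shows "Hausdorff_space (orbit_space X f) \<longleftrightarrow>
           (\<exists>U V. openin X U \<and> openin X V \<and> U \<noteq> {} \<and> V \<noteq> {} \<and> U \<inter> V = {})"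
proof
  assume H: "Hausdorff_space (orbit_space X f)"
  show "\<exists>U V. openin X U \<and> openin X V \<and> U \<noteq> {} \<and> V \<noteq> {} \<and> U \<inter> V = {}"
  proof (rule ccontr)
    assume nd: "\<not> ?thesis"
    obtain h :: 'g where h0: "h \<noteq> 0"
    proof -
      have "UNIV \<noteq> {0::'g}"
      proof
        assume "UNIV = {0::'g}"
        then have "finite (UNIV :: 'g set)" by (metis finite.emptyI finite.insertI)
        then show False using inf by contradiction
      qed
      then show ?thesis using that by blast
    qed
    obtain a b where ab: "a \<in> topspace X" "b \<in> topspace X" "a \<noteq> b" using two by blast
    have fX: "\<And>i. f i \<in> topspace X" using kor_range[OF kor] .
    define t where "t = (\<lambda>i. if i = 0 then a else if i = h then b else undefined)"
    have "t \<in> PiE {0,h} (\<lambda>_. topspace X)" using ab h0 by (auto simp: t_def)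
    then obtain k where k: "\<forall>i\<in>{0,h}. f (i + k) = t i" using kor_pick[OF kor, of "{0,h}" t] by auto
    have sh0: "shift 0 f = f" by (simp add: shift_def)
    have neq: "f \<noteq> shift h f"
    proof
      assume "f = shift h f"
      from fun_cong[OF this, of k] have "f k = f (k + h)" by (simp only: shift_def)
      moreover have "f k = a" "f (h + k) = b" using k h0 by (auto simp: t_def)
      ultimately show False using ab(3) by (simp add: add.commute)
    qed
    have inorb: "\<And>g. shift g f \<in> topspace (orbit_space X f)"
    proof -
      fix g
      have "shift g f \<in> topspace (power_top X)" using fX by (simp add: top_power shift_def)
      moreover have "shift g f \<in> orbit f" unfolding orbit_def by blast
      ultimately show "shift g f \<in> topspace (orbit_space X f)" by (simp add: top_orbit)
    qed
    obtain O1 O2 where O: "openin (orbit_space X f) O1" "openin (orbit_space X f) O2"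
      "f \<in> O1" "shift h f \<in> O2" "disjnt O1 O2"
    proof -
      have "f \<in> topspace (orbit_space X f)" using inorb[of 0] sh0 by simp
      then show ?thesis
        using H[unfolded Hausdorff_space_def, rule_format, of f "shift h f"] neq inorb[of h] that
        by blast
    qed
    obtain W1 where W1: "openin (power_top X) W1" "O1 = W1 \<inter> orbit f"
      using O(1) unfolding orbit_space_def openin_subtopology by blast
    obtain W2 where W2: "openin (power_top X) W2" "O2 = W2 \<inter> orbit f"
      using O(2) unfolding orbit_space_def openin_subtopology by blast
    obtain U where U: "finite {i. U i \<noteq> topspace X}" "\<And>i. openin X (U i)"
      "f \<in> PiE UNIV U" "PiE UNIV U \<subseteq> W1"
      using W1 O(3) unfolding power_top_def openin_product_topology_alt by auto
    obtain V where V: "finite {i. V i \<noteq> topspace X}" "\<And>i. openin X (V i)"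
      "shift h f \<in> PiE UNIV V" "PiE UNIV V \<subseteq> W2"
      using W2 O(4) unfolding power_top_def openin_product_topology_alt by auto
    define F where "F = {i. U i \<noteq> topspace X} \<union> {i. V i \<noteq> topspace X}"
    have fin: "finite F" using U(1) V(1) by (simp add: F_def)
    have ne: "U i \<inter> V i \<noteq> {}" for i
    proof -
      have "f i \<in> U i" using U(3) by auto
      moreover have "shift h f i \<in> V i" using V(3) by auto
      ultimately show ?thesis using nd U(2) V(2) by blast
    qed
    define s where "s = (\<lambda>i. if i \<in> F then (SOME z. z \<in> U i \<inter> V i) else undefined)"
    have sUV: "s i \<in> U i \<inter> V i" if "i \<in> F" for i
    proof -
      from ne[of i] obtain z where "z \<in> U i \<inter> V i" by blast
      then have "(SOME z. z \<in> U i \<inter> V i) \<in> U i \<inter> V i" by (rule someI)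
      then show ?thesis using that by (simp add: s_def)
    qed
    have "s \<in> PiE F (\<lambda>_. topspace X)"
    proof -
      have "s i \<in> topspace X" if "i \<in> F" for i
        using sUV[OF that] openin_subset[OF U(2)[of i]] by blast
      then show ?thesis by (auto simp: s_def)
    qed
    then obtain c where c: "\<forall>i\<in>F. f (i + c) = s i" using kor_pick[OF kor fin] by blast
    have "shift c f \<in> PiE UNIV U"
    proof -
      have "shift c f i \<in> U i" for i
      proof (cases "i \<in> F")
        case True then show ?thesis using c sUV by (auto simp: shift_def)
      next
        case False then show ?thesis using fX by (auto simp: shift_def F_def)
      qed
      then show ?thesis by auto
    qed
    moreover have "shift c f \<in> PiE UNIV V"
    proof -
      have "shift c f i \<in> V i" for i
      proof (cases "i \<in> F")
        case True then show ?thesis using c sUV by (auto simp: shift_def)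
      next
        case False then show ?thesis using fX by (auto simp: shift_def F_def)
      qed
      then show ?thesis by auto
    qed
    moreover have "shift c f \<in> orbit f" by (auto simp: orbit_def)
    ultimately have "shift c f \<in> O1 \<inter> O2" using U(4) V(4) W1(2) W2(2) by blast
    then show False using O(5) by (auto simp: disjnt_def)
  qed
next
  assume "\<exists>U V. openin X U \<and> openin X V \<and> U \<noteq> {} \<and> V \<noteq> {} \<and> U \<inter> V = {}"
  then obtain U V where UV: "openin X U" "openin X V" "U \<noteq> {}" "V \<noteq> {}" "U \<inter> V = {}" by blast
  obtain u v where uv: "u \<in> U" "v \<in> V" using UV by blast
  have uvX: "u \<in> topspace X" "v \<in> topspace X" using uv UV openin_subset by blast+
  show "Hausdorff_space (orbit_space X f)"
    unfolding Hausdorff_space_def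
  proof (intro allI impI)
    fix x y assume xy: "x \<in> topspace (orbit_space X f) \<and> y \<in> topspace (orbit_space X f) \<and> x \<noteq> y"
    then have "x \<in> orbit f" "y \<in> orbit f" by (simp_all add: top_orbit)
    then obtain g g' where gg: "x = shift g f" "y = shift g' f"
      unfolding orbit_def by blast
    with xy have "g \<noteq> g'" by auto
    define t where "t = (\<lambda>i. if i = g then u else if i = g' then v else undefined)"
    have "t \<in> PiE {g,g'} (\<lambda>_. topspace X)" using uvX by (auto simp: t_def)
    then obtain k where k: "\<forall>i\<in>{g,g'}. f (i + k) = t i" using kor_pick[OF kor, of "{g,g'}" t] by auto
    have xk: "x k \<in> U" using k uv \<open>g \<noteq> g'\<close> by (auto simp: gg shift_def t_def add.commute)
    have yk: "y k \<in> V" using k uv \<open>g \<noteq> g'\<close> by (auto simp: gg shift_def t_def add.commute)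
    have cm: "continuous_map (power_top X) X (\<lambda>h. h k)"
      unfolding power_top_def using continuous_map_product_projection[of k UNIV "\<lambda>_. X"] by simp
    define A where "A = {h \<in> topspace (power_top X). h k \<in> U}"
    define B where "B = {h \<in> topspace (power_top X). h k \<in> V}"
    have oA: "openin (power_top X) A" unfolding A_def by (rule openin_continuous_map_preimage[OF cm UV(1)])
    have oB: "openin (power_top X) B" unfolding B_def by (rule openin_continuous_map_preimage[OF cm UV(2)])
    show "\<exists>U V. openin (orbit_space X f) U \<and> openin (orbit_space X f) V \<and> x \<in> U \<and> y \<in> V \<and> disjnt U V"
    proof (intro exI conjI)
      show "openin (orbit_space X f) (A \<inter> orbit f)" unfolding orbit_space_def openin_subtopology using oA by blast
      show "openin (orbit_space X f) (B \<inter> orbit f)" unfolding orbit_space_def openin_subtopology using oB by blast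
      show "x \<in> A \<inter> orbit f" using xy xk by (auto simp: A_def top_orbit)
      show "y \<in> B \<inter> orbit f" using xy yk by (auto simp: B_def top_orbit)
      show "disjnt (A \<inter> orbit f) (B \<inter> orbit f)" using UV(5) by (auto simp: A_def B_def disjnt_def)
    qed
  qed
qed

theorem proposition4p2:
  fixes X :: "'a topology" and f :: "'g::ab_group_add \<Rightarrow> 'a"
  assumes "\<exists>a\<in>topspace X. \<exists>b\<in>topspace X. a \<noteq> b"
    and "infinite (UNIV :: 'g set)"
    and "korovin_mapping X f"
  shows "(Hausdorff_space (orbit_space X f) \<longleftrightarrow>
           (\<exists>U V. openin X U \<and> openin X V \<and> U \<noteq> {} \<and> V \<noteq> {} \<and> U \<inter> V = {}))
       \<and> ((\<forall>f'::'g \<Rightarrow> 'a. korovin_mapping X f' \<longrightarrow> Hausdorff_space (orbit_space X f')) \<longleftrightarrow>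
          (\<exists>f'::'g \<Rightarrow> 'a. korovin_mapping X f' \<and> Hausdorff_space (orbit_space X f')))"
  using main[OF assms(1,2)] assms(3) by blast

end
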